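(* For all integers $m\geq 2$ and every $\lambda>-\frac12$, $$\frac{(m-1)m^2(m+1)(m+\lambda)^2(m+\lambda+1)^2}{2(2\lambda+1)(2\lambda+5)}\leq A_{2,m}\leq\frac{(m-1)m(m+1)^2(m+\lambda)^2(m+\lambda+1)(m+\lambda+2)}{2(2\lambda+1)(2\lambda+5)}.$$
   Context: Fix $\lambda>-1/2$. Define polynomials $Q_m$ by $Q_0=1$, $Q_1(\mu)=1-\frac{2(\lambda+1)(\lambda+2)}{2\lambda+1}\mu$ and, for $m\geq2$, $$Q_m-Q_{m-1}=\frac{m(2m-1)(2m+\lambda)}{(m-1+\lambda)(2m-2+\lambda)(2m-1+2\lambda)}\big[Q_{m-1}-Q_{m-2}\big]-\frac{2m(2m-1+\lambda)(2m+\lambda)}{2m-1+2\lambda}\,\mu\,Q_{m-1}(\mu).$$ Write $Q_m(\mu)=\sum_{i=0}^m(-1)^iA_{i,m}\mu^i$; thus $A_{2,m}$ is the coefficient of $\mu^2$ in $Q_m$. *)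

theory Defs
  imports "HOL-Computational_Algebra.Polynomial"
begin

text \<open>The polynomials Q_m(mu) (in the variable mu) depending on the parameter lambda.
  Q l m is Q_m for lambda = l.\<close>
fun Q :: "real \<Rightarrow> nat \<Rightarrow> real poly" where
  "Q l 0 = 1"
| "Q l (Suc 0) = [:1, - (2 * (l + 1) * (l + 2) / (2 * l + 1)):]"
| "Q l (Suc (Suc n)) =
     (let m = real (Suc (Suc n)) in
      Q l (Suc n)
      + smult (m * (2*m - 1) * (2*m + l) / ((m - 1 + l) * (2*m - 2 + l) * (2*m - 1 + 2*l)))
              (Q l (Suc n) - Q l n)
      - smult (2 * m * (2*m - 1 + l) * (2*m + l) / (2*m - 1 + 2*l)) (pCons 0 (Q l (Suc n))))"

definition A :: "real \<Rightarrow> nat \<Rightarrow> nat \<Rightarrow> real" where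
  "A l i m = (-1) ^ i * coeff (Q l m) i"

end

theory Submission
  imports Defs
begin

definition B :: "real \<Rightarrow> real \<Rightarrow> real" where
  "B l x = (x - 1) * x * (x + 1) * (x + l) * (x + l + 1) *
     (3*(2*l+3)*(x^3 + (2*l+3)*x^2) + (6*l^3+31*l^2+41*l+4)*x + (4*l^3+10*l^2-10*l-28))"
definition AA :: "real \<Rightarrow> real \<Rightarrow> real" where
  "AA l x = x * (x + 1) * (x + l) * (x + l + 1)"

lemma idB: "(m-1+l)*(2*m-2+l)*(2*m-1+2*l)*(B l m - B l (m-1)) =
   m*(2*m-1)*(2*m+l)*(B l (m-1) - B l (m-2)) + 2*m*(2*m-1+l)*(2*m+l)*(m-1+l)*(2*m-2+l)*(6*(2*l+3)*(2*l+5))*AA l (m-1)"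
  unfolding B_def AA_def by algebra

lemma idA: "(m-1+l)*(2*m-2+l)*(2*m-1+2*l)*(AA l m - AA l (m-1)) =
   m*(2*m-1)*(2*m+l)*(AA l (m-1) - AA l (m-2)) + 2*m*(2*m-1+l)*(2*m+l)*(m-1+l)*(2*m-2+l)*(2*l+1)"
  unfolding AA_def by algebra

lemma c0: "coeff (Q l n) 0 = 1"
  by (induction l n rule: Q.induct) (simp_all add: Let_def)

lemma pc2: "coeff (pCons 0 p) 2 = coeff p 1"
  by (simp add: numeral_2_eq_2)

lemma gen:
  fixes D F E K H G P R XA XB XC AX :: real
  assumes "D = F*E" "F>0" "E>0" "K=H*G" "H>0" "G>0" "D*(XC-XB) = P*(XB-XA) + R*F*G*AX"
  shows "XC/K = XB/K + P/D*(XB/K-XA/K) - R/E*(- AX/H)"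
proof -
  have "XC - XB = (P*(XB-XA) + R*F*G*AX)/D" using assms by (simp add: field_simps)
  then have "XC = XB + P/D*(XB-XA) + R/E*(AX*G)" using assms by (simp add: field_simps)
  then show ?thesis using assms by (simp add: field_simps)
qed

lemma main:
  assumes "l > -1/2"
  shows "coeff (Q l n) 1 = - AA l (real n) / (2*l+1) \<and> coeff (Q l n) 2 = B l (real n) / (6*(2*l+1)*(2*l+3)*(2*l+5))"
using assms proof (induction l n rule: Q.induct)
  case (1 l)
  then show ?case by (simp add: AA_def B_def)
next
  case (2 l)
  then have "2*l+1 \<noteq> 0" by linarith
  then show ?case by (simp add: AA_def B_def field_simps numeral_2_eq_2)
next
  case (3 l n)
  note IH1 = "3.IH"[OF refl "3.prems"] and IH2 = "3.IH"[OF refl "3.prems"]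
  define m where "m = real (Suc (Suc n))"
  have rn: "real (Suc n) = m - 1" "real n = m - 2" "m \<ge> 2" unfolding m_def by auto
  define c where "c = m * (2*m - 1) * (2*m + l) / ((m - 1 + l) * (2*m - 2 + l) * (2*m - 1 + 2*l))"
  define d where "d = 2 * m * (2*m - 1 + l) * (2*m + l) / (2*m - 1 + 2*l)"
  have Qeq: "Q l (Suc (Suc n)) = Q l (Suc n) + smult c (Q l (Suc n) - Q l n) - smult d (pCons 0 (Q l (Suc n)))"
    unfolding m_def c_def d_def by (simp only: Q.simps Let_def)
  have k1: "coeff (Q l (Suc (Suc n))) 1 = coeff (Q l (Suc n)) 1 + c * (coeff (Q l (Suc n)) 1 - coeff (Q l n) 1) - d * coeff (Q l (Suc n)) 0"
    unfolding Qeq by (simp add: coeff_pCons)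
  have k2: "coeff (Q l (Suc (Suc n))) 2 = coeff (Q l (Suc n)) 2 + c * (coeff (Q l (Suc n)) 2 - coeff (Q l n) 2) - d * coeff (Q l (Suc n)) 1"
    unfolding Qeq by (simp add: pc2)
  have p: "m-1+l > 0" "2*m-2+l > 0" "2*m-1+2*l > 0" "2*l+1>0" "2*l+3>0" "2*l+5>0" using "3.prems" rn by auto
  have A: "- AA l m / (2*l+1) = - AA l (m-1) / (2*l+1) + c * (- AA l (m-1) / (2*l+1) - - AA l (m-2) / (2*l+1)) - d * 1"
  proof -
    have "- AA l m / (2*l+1) = (- AA l (m-1)) / (2*l+1) + c * ((- AA l (m-1)) / (2*l+1) - (- AA l (m-2)) / (2*l+1)) - d * (- (-1) / 1)"
      unfolding c_def d_def
      apply (rule gen[where F="(m - 1 + l) * (2*m - 2 + l)" and G="2*l+1" and H=1 and K="2*l+1" and AX="-1"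
         and E="2*m - 1 + 2*l" and D="(m - 1 + l) * (2*m - 2 + l) * (2*m - 1 + 2*l)" and P="m * (2*m - 1) * (2*m + l)"
         and R="2 * m * (2*m - 1 + l) * (2*m + l)" and XC="- AA l m" and XB="- AA l (m-1)" and XA="- AA l (m-2)"])
      using p apply simp_all
      using idA[of m l] by (simp add: algebra_simps)
    then show ?thesis by simp
  qed
  have Bq: "B l m / (6*(2*l+1)*(2*l+3)*(2*l+5)) = B l (m-1) / (6*(2*l+1)*(2*l+3)*(2*l+5)) + c * (B l (m-1) / (6*(2*l+1)*(2*l+3)*(2*l+5)) - B l (m-2) / (6*(2*l+1)*(2*l+3)*(2*l+5))) - d * (- AA l (m-1) / (2*l+1))"
      unfolding c_def d_def
      apply (rule gen[where F="(m - 1 + l) * (2*m - 2 + l)" and G="6*(2*l+3)*(2*l+5)" and H="2*l+1" and K="6*(2*l+1)*(2*l+3)*(2*l+5)" and AX="AA l (m-1)"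
         and E="2*m - 1 + 2*l" and D="(m - 1 + l) * (2*m - 2 + l) * (2*m - 1 + 2*l)" and P="m * (2*m - 1) * (2*m + l)"
         and R="2 * m * (2*m - 1 + l) * (2*m + l)" and XC="B l m" and XB="B l (m-1)" and XA="B l (m-2)"])
      subgoal by simp
      subgoal using p by simp
      subgoal using p by simp
      subgoal by (simp add: algebra_simps)
      subgoal using p by simp
      subgoal using p by simp
      using idB[of m l] by (simp only: mult.assoc)
  from IH1 have i1: "coeff (Q l (Suc n)) 1 = - AA l (m-1) / (2*l+1)" "coeff (Q l (Suc n)) 2 = B l (m-1) / (6*(2*l+1)*(2*l+3)*(2*l+5))"
    unfolding rn by auto
  from IH2 have i0: "coeff (Q l n) 1 = - AA l (m-2) / (2*l+1)" "coeff (Q l n) 2 = B l (m-2) / (6*(2*l+1)*(2*l+3)*(2*l+5))"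
    unfolding rn by auto
  have g1: "coeff (Q l (Suc (Suc n))) 1 = - AA l m / (2*l+1)"
    unfolding k1 i1 i0 c0 A by (rule refl)
  have g2: "coeff (Q l (Suc (Suc n))) 2 = B l m / (6*(2*l+1)*(2*l+3)*(2*l+5))"
    unfolding k2 i1 i0 Bq by (rule refl)
  show ?case unfolding m_def[symmetric] using g1 g2 by blast
qed


lemma lowpoly:
  fixes l x :: real assumes "l > -1/2" "x \<ge> 2"
  shows "3*(2*l+3)*(x*(x+l)*(x+l+1)) \<le> 3*(2*l+3)*(x^3 + (2*l+3)*x^2) + (6*l^3+31*l^2+41*l+4)*x + (4*l^3+10*l^2-10*l-28)"
proof -
  define y where "y = l + 1/2"
  define t where "t = x - 2"
  have y: "y > 0" and t: "t \<ge> 0" using assms by (auto simp: y_def t_def)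
  have "3*(2*l+3)*(x^3 + (2*l+3)*x^2) + (6*l^3+31*l^2+41*l+4)*x + (4*l^3+10*l^2-10*l-28) - 3*(2*l+3)*(x*(x+l)*(x+l+1))
     = 12*(y+1)*t^2 + (16*y^2+64*y+40)*t + (4*y^3+36*y^2+63*y+11)"
    unfolding y_def t_def by (simp add: algebra_simps power2_eq_square power3_eq_cube)
  moreover have "12*(y+1)*t^2 + (16*y^2+64*y+40)*t + (4*y^3+36*y^2+63*y+11) \<ge> 0"
    using y t by (intro add_nonneg_nonneg mult_nonneg_nonneg) auto
  ultimately show ?thesis by linarith
qed

lemma uppoly:
  fixes l x :: real assumes "l > -1/2" "x \<ge> 2"
  shows "3*(2*l+3)*(x^3 + (2*l+3)*x^2) + (6*l^3+31*l^2+41*l+4)*x + (4*l^3+10*l^2-10*l-28) \<le> 3*(2*l+3)*((x+1)*(x+l)*(x+l+2))"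
proof -
  define y where "y = l + 1/2"
  define t where "t = x - 2"
  have y: "y > 0" and t: "t \<ge> 0" using assms by (auto simp: y_def t_def)
  have "3*(2*l+3)*((x+1)*(x+l)*(x+l+2)) - (3*(2*l+3)*(x^3 + (2*l+3)*x^2) + (6*l^3+31*l^2+41*l+4)*x + (4*l^3+10*l^2-10*l-28))
     = ((4*y^2+10*y+22)*t + (4*y^3+24*y^2+57*y+77)) / 2"
    unfolding y_def t_def by (simp add: algebra_simps power2_eq_square power3_eq_cube)
  moreover have "((4*y^2+10*y+22)*t + (4*y^3+24*y^2+57*y+77)) / 2 \<ge> 0"
    using y t by (intro divide_nonneg_nonneg add_nonneg_nonneg mult_nonneg_nonneg) auto
  ultimately show ?thesis by linarith
qed


lemma final:
  fixes m :: nat and l :: real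
  assumes "m \<ge> 2" and "l > - 1/2"
  shows "real (m - 1) * real m ^ 2 * real (m + 1) * (real m + l) ^ 2 * (real m + l + 1) ^ 2
           / (2 * (2*l + 1) * (2*l + 5)) \<le> coeff (Q l m) 2 \<and>
         coeff (Q l m) 2 \<le> real (m - 1) * real m * real (m + 1) ^ 2 * (real m + l) ^ 2
           * (real m + l + 1) * (real m + l + 2) / (2 * (2*l + 1) * (2*l + 5))"
proof -
  define x where "x = real m"
  have x2: "x \<ge> 2" using assms by (simp add: x_def)
  have r: "real (m - 1) = x - 1" "real (m+1) = x + 1" using assms by (auto simp: x_def)
  define K where "K = 6*(2*l+1)*(2*l+3)*(2*l+5)"
  define P5 where "P5 = (x - 1) * x * (x + 1) * (x + l) * (x + l + 1)"
  define N where "N = 3*(2*l+3)*(x^3 + (2*l+3)*x^2) + (6*l^3+31*l^2+41*l+4)*x + (4*l^3+10*l^2-10*l-28)"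
  have K: "K > 0" using assms unfolding K_def by (intro mult_pos_pos) auto
  have P5: "P5 \<ge> 0" using assms x2 unfolding P5_def by (intro mult_nonneg_nonneg) auto
  have c: "coeff (Q l m) 2 = P5 * N / K"
    using main[OF assms(2), of m] unfolding K_def P5_def N_def B_def x_def by simp
  have p: "2*l+1 \<noteq> 0" "2*l+3 \<noteq> 0" "2*l+5 \<noteq> 0" using assms by auto
  have Kf: "K = (3*(2*l+3)) * (2*(2*l+1)*(2*l+5))" unfolding K_def by algebra
  have kk: "3*(2*l+3)/K = 1/(2*(2*l+1)*(2*l+5))" unfolding Kf using p by simp
  have L: "real (m - 1) * real m ^ 2 * real (m + 1) * (real m + l) ^ 2 * (real m + l + 1) ^ 2
           / (2 * (2*l + 1) * (2*l + 5)) = P5 * (3*(2*l+3)*(x*(x+l)*(x+l+1))) / K"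
  proof -
    have e1: "P5 * (3*(2*l+3)*(x*(x+l)*(x+l+1))) / K = (P5 * (x*(x+l)*(x+l+1))) * (3*(2*l+3)/K)" by simp
    have e2: "real (m - 1) * real m ^ 2 * real (m + 1) * (real m + l) ^ 2 * (real m + l + 1) ^ 2 = P5 * (x*(x+l)*(x+l+1))"
      unfolding r x_def[symmetric] P5_def by algebra
    show ?thesis unfolding e1 kk e2 by simp
  qed
  have U: "real (m - 1) * real m * real (m + 1) ^ 2 * (real m + l) ^ 2
           * (real m + l + 1) * (real m + l + 2)
           / (2 * (2*l + 1) * (2*l + 5)) = P5 * (3*(2*l+3)*((x+1)*(x+l)*(x+l+2))) / K"
  proof -
    have e1: "P5 * (3*(2*l+3)*((x+1)*(x+l)*(x+l+2))) / K = (P5 * ((x+1)*(x+l)*(x+l+2))) * (3*(2*l+3)/K)" by simp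
    have e2: "real (m - 1) * real m * real (m + 1) ^ 2 * (real m + l) ^ 2
           * (real m + l + 1) * (real m + l + 2) = P5 * ((x+1)*(x+l)*(x+l+2))"
      unfolding r x_def[symmetric] P5_def by algebra
    show ?thesis unfolding e1 kk e2 by simp
  qed
  have "P5 * (3*(2*l+3)*(x*(x+l)*(x+l+1))) / K \<le> P5 * N / K"
    using lowpoly[OF assms(2) x2] P5 K unfolding N_def
    by (intro divide_right_mono mult_left_mono) auto
  moreover have "P5 * N / K \<le> P5 * (3*(2*l+3)*((x+1)*(x+l)*(x+l+2))) / K"
    using uppoly[OF assms(2) x2] P5 K unfolding N_def
    by (intro divide_right_mono mult_left_mono) auto
  ultimately show ?thesis unfolding L U c by simp
qed


theorem lemma3p5:
  fixes m :: nat and l :: real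
  assumes "m \<ge> 2" and "l > - 1/2"
  shows "real (m - 1) * real m ^ 2 * real (m + 1) * (real m + l) ^ 2 * (real m + l + 1) ^ 2
           / (2 * (2*l + 1) * (2*l + 5)) \<le> A l 2 m \<and>
         A l 2 m \<le> real (m - 1) * real m * real (m + 1) ^ 2 * (real m + l) ^ 2
           * (real m + l + 1) * (real m + l + 2) / (2 * (2*l + 1) * (2*l + 5))"
  using final[OF assms] by (simp add: A_def)

end
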